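(* Let $\alpha>0$, $\tau=\beta/\alpha\in[0,1)$, $D_0\in\mathbb{R}$, and $p^a_1,p^a_2,p^d_1,p^d_2\in\mathbb{R}$. Let $$X=\frac12\begin{pmatrix}0&0&-1&0\\0&0&0&-1\\-1&\tau&0&\tau\\\tau&-1&\tau&0\end{pmatrix},\qquad Y=\begin{pmatrix}\frac{D_0-(\alpha-\beta)p^d_1}{2(\alpha-\beta)}\\[2pt]\frac{D_0-(\alpha-\beta)p^d_2}{2(\alpha-\beta)}\\[2pt]\frac{D_0-\alpha(p^a_1-p^d_1)}{2\alpha}\\[2pt]\frac{D_0-\alpha(p^a_2-p^d_2)}{2\alpha}\end{pmatrix}.$$ Then $I-X$ is invertible. Moreover, for every initial vector $p_0\in\mathbb{R}^4$, the sequence defined by $p_{t+1}=Xp_t+Y$ converges to $(I-X)^{-1}Y$.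
   Context: The vector $p_t=(p^s_{1t},p^s_{2t},p^c_{1t},p^c_{2t})$ represents the prices set on day $t$ in the two-CP ex ante regulated model. The iteration is the simultaneous best-response update in which each player sets its price using the unconstrained linear demands $d_i=D_0-\alpha p_i+\beta p_j$. *)

theory Defs
  imports "HOL-Analysis.Analysis"
begin

text \<open>Iteration matrix X (indices 1..4 of the paper correspond to 1..4 of type 4).\<close>
definition X_mat :: "real \<Rightarrow> real^4^4" where
  "X_mat \<tau> = (1/2) *\<^sub>R (vector [
      vector [0, 0, -1, 0],
      vector [0, 0, 0, -1],
      vector [-1, \<tau>, 0, \<tau>],
      vector [\<tau>, -1, \<tau>, 0]])"

definition Y_vec :: "real \<Rightarrow> real \<Rightarrow> real \<Rightarrow> real \<Rightarrow> real \<Rightarrow> real \<Rightarrow> real \<Rightarrow> real^4" where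
  "Y_vec \<alpha> \<beta> D0 pa1 pa2 pd1 pd2 = vector [
      (D0 - (\<alpha> - \<beta>) * pd1) / (2 * (\<alpha> - \<beta>)),
      (D0 - (\<alpha> - \<beta>) * pd2) / (2 * (\<alpha> - \<beta>)),
      (D0 - \<alpha> * (pa1 - pd1)) / (2 * \<alpha>),
      (D0 - \<alpha> * (pa2 - pd2)) / (2 * \<alpha>)]"

fun price_iter :: "real^4^4 \<Rightarrow> real^4 \<Rightarrow> real^4 \<Rightarrow> nat \<Rightarrow> real^4" where
  "price_iter X Y p0 0 = p0"
| "price_iter X Y p0 (Suc t) = X *v price_iter X Y p0 t + Y"

end

theory Submission imports Defs begin
lemma Xc:
  fixes e :: "real^4"
  shows "(X_mat t *v e) $ 1 = - (e$3) / 2"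
    "(X_mat t *v e) $ 2 = - (e$4) / 2"
    "(X_mat t *v e) $ 3 = (- (e$1) + t * e$2 + t * e$4) / 2"
    "(X_mat t *v e) $ 4 = (t * e$1 - e$2 + t * e$3) / 2"
  by (simp_all add: X_mat_def matrix_vector_mult_def sum_4 vector_def field_simps)

definition VV :: "real \<Rightarrow> real^4 \<Rightarrow> real" where
  "VV c e = max (c * max \<bar>e$1\<bar> \<bar>e$2\<bar>) (max \<bar>e$3\<bar> \<bar>e$4\<bar>)"

lemma VV_ge:
  assumes "c > 0"
  shows "c * \<bar>e$1\<bar> \<le> VV c e" "c * \<bar>e$2\<bar> \<le> VV c e" "\<bar>e$3\<bar> \<le> VV c e" "\<bar>e$4\<bar> \<le> VV c e"
    "\<bar>e$1\<bar> \<le> VV c e / c" "\<bar>e$2\<bar> \<le> VV c e / c" "0 \<le> VV c e"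
proof -
  show a: "c * \<bar>e$1\<bar> \<le> VV c e" "c * \<bar>e$2\<bar> \<le> VV c e"
  proof -
    have "c * \<bar>e$1\<bar> \<le> c * max \<bar>e$1\<bar> \<bar>e$2\<bar>" "c * \<bar>e$2\<bar> \<le> c * max \<bar>e$1\<bar> \<bar>e$2\<bar>"
      using assms by (auto intro!: mult_left_mono)
    then show "c * \<bar>e$1\<bar> \<le> VV c e" "c * \<bar>e$2\<bar> \<le> VV c e" unfolding VV_def by (simp_all add: max.coboundedI1)
  qed
  show "\<bar>e$3\<bar> \<le> VV c e" "\<bar>e$4\<bar> \<le> VV c e" by (simp_all add: VV_def le_max_iff_disj)
  show "\<bar>e$1\<bar> \<le> VV c e / c" "\<bar>e$2\<bar> \<le> VV c e / c"
    using a assms by (simp_all add: pos_le_divide_eq mult.commute)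
  show "0 \<le> VV c e" by (simp_all add: VV_def le_max_iff_disj)
qed

lemma VV_le:
  assumes "c > 0" "M \<ge> 0" "c * \<bar>e$1\<bar> \<le> M" "c * \<bar>e$2\<bar> \<le> M" "\<bar>e$3\<bar> \<le> M" "\<bar>e$4\<bar> \<le> M"
  shows "VV c e \<le> M"
  using assms by (auto simp: VV_def abs_mult max_mult_distrib_left[symmetric])

lemma tri3: "0 \<le> (t::real) \<Longrightarrow> \<bar>x + t * y + t * z\<bar> \<le> \<bar>x\<bar> + t * \<bar>y\<bar> + t * \<bar>z\<bar>"
proof -
  assume "0 \<le> t"
  then have "\<bar>t * y\<bar> = t * \<bar>y\<bar>" "\<bar>t * z\<bar> = t * \<bar>z\<bar>" by (simp_all add: abs_mult)
  moreover have "\<bar>x + t * y + t * z\<bar> \<le> \<bar>x\<bar> + \<bar>t * y\<bar> + \<bar>t * z\<bar>" by linarith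
  ultimately show ?thesis by simp
qed

lemma contract:
  fixes t :: real and e :: "real^4"
  assumes t0: "0 \<le> t" and t1: "t < 1"
  defines "c \<equiv> 4 * (1 + t) / (5 - t)"
  defines "q \<equiv> max (2 * (1 + t) / (5 - t)) ((5 + 3 * t) / 8)"
  shows "VV c (X_mat t *v e) \<le> q * VV c e"
proof -
  have c0: "c > 0" using t0 t1 unfolding c_def by auto
  let ?V = "VV c e"
  note g = VV_ge[OF c0, of e]
  have q1: "2 * (1 + t) / (5 - t) \<le> q" "(5 + 3 * t) / 8 \<le> q" unfolding q_def by auto
  have hc: "c / 2 = 2 * (1 + t) / (5 - t)" unfolding c_def using t0 t1 by (simp add: field_simps)
  have hq: "c/2 \<le> q" using hc q1 by linarith
  have A: "c * \<bar>e$k\<bar> / 2 \<le> q * ?V" if "\<bar>e$k\<bar> \<le> ?V" for k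
  proof -
    have "c * \<bar>e$k\<bar> / 2 = (c/2) * \<bar>e$k\<bar>" by simp
    also have "\<dots> \<le> (c/2) * ?V" using that c0 by (intro mult_left_mono) auto
    also have "\<dots> \<le> q * ?V" using hq g(7) by (intro mult_right_mono) auto
    finally show ?thesis .
  qed
  have B: "\<bar>a\<bar> + t * \<bar>b\<bar> + t * \<bar>d\<bar> \<le> 2 * (q * ?V)"
    if "\<bar>a\<bar> \<le> ?V / c" "\<bar>b\<bar> \<le> ?V / c" "\<bar>d\<bar> \<le> ?V" for a b d
  proof -
    have "t * \<bar>b\<bar> \<le> t * (?V / c)" using that t0 by (intro mult_left_mono) auto
    moreover have "t * \<bar>d\<bar> \<le> t * ?V" using that t0 by (intro mult_left_mono) auto
    ultimately have "\<bar>a\<bar> + t * \<bar>b\<bar> + t * \<bar>d\<bar> \<le> ?V / c + t * (?V / c) + t * ?V"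
      using that by linarith
    also have "?V / c + t * (?V / c) + t * ?V = ((1 + t) / c) * ?V + t * ?V" using c0 by (simp add: field_simps)
    also have "(1 + t) / c = (5 - t) / 4" unfolding c_def using t0 t1 by (simp add: field_simps)
    also have "((5 - t) / 4) * ?V + t * ?V = 2 * (((5 + 3*t)/8) * ?V)" by (simp add: field_simps)
    also have "\<dots> \<le> 2 * (q * ?V)" using q1 g(7) by (intro mult_left_mono mult_right_mono) auto
    finally show ?thesis .
  qed
  have q0: "q \<ge> 0" proof - have "(5 + 3 * t) / 8 \<ge> 0" using t0 by simp then show ?thesis using q1(2) by linarith qed
  have qV: "q * ?V \<ge> 0" using g(7) q0 by simp
  show ?thesis
  proof (rule VV_le[OF c0 qV])
    show "c * \<bar>(X_mat t *v e) $ 1\<bar> \<le> q * ?V" using A[of 3] g by (simp add: Xc abs_minus_cancel)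
    show "c * \<bar>(X_mat t *v e) $ 2\<bar> \<le> q * ?V" using A[of 4] g by (simp add: Xc abs_minus_cancel)
    have "\<bar>- (e$1) + t * e$2 + t * e$4\<bar> \<le> \<bar>e$1\<bar> + t * \<bar>e$2\<bar> + t * \<bar>e$4\<bar>"
      using tri3[where x="- (e$1)" and y="e$2" and z="e$4"] t0 by simp
    then show "\<bar>(X_mat t *v e) $ 3\<bar> \<le> q * ?V" using B[of "e$1" "e$2" "e$4"] g by (simp add: Xc)
    have "\<bar>t * e$1 - e$2 + t * e$3\<bar> \<le> \<bar>e$2\<bar> + t * \<bar>e$1\<bar> + t * \<bar>e$3\<bar>"
      using tri3[where x="- (e$2)" and y="e$1" and z="e$3"] t0 by (simp add: algebra_simps)
    then show "\<bar>(X_mat t *v e) $ 4\<bar> \<le> q * ?V" using B[of "e$2" "e$1" "e$3"] g by (simp add: Xc)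
  qed
qed

lemma cq:
  assumes t0: "0 \<le> (t::real)" and t1: "t < 1"
  shows "4 * (1 + t) / (5 - t) > 0" "max (2 * (1 + t) / (5 - t)) ((5 + 3 * t) / 8) < 1"
    "max (2 * (1 + t) / (5 - t)) ((5 + 3 * t) / 8) \<ge> 0"
proof -
  show "4 * (1 + t) / (5 - t) > 0" using assms by simp
  have "2 * (1 + t) / (5 - t) < 1" using assms by (simp add: divide_less_eq)
  moreover have "(5 + 3 * t) / 8 < 1" using assms by simp
  ultimately show "max (2 * (1 + t) / (5 - t)) ((5 + 3 * t) / 8) < 1" by simp
  have "(5 + 3 * t) / 8 \<ge> 0" using assms by simp
  then show "max (2 * (1 + t) / (5 - t)) ((5 + 3 * t) / 8) \<ge> 0" by linarith
qed

lemma VV_zero: assumes "c > 0" "VV c e \<le> 0" shows "e = 0"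
proof -
  have "\<bar>e$1\<bar> \<le> 0" "\<bar>e$2\<bar> \<le> 0" "\<bar>e$3\<bar> \<le> 0" "\<bar>e$4\<bar> \<le> 0"
    using VV_ge[OF assms(1), of e] assms(2) by (auto simp: divide_le_0_iff)
  then show ?thesis by (simp add: vec_eq_iff forall_4)
qed

lemma norm_VV: assumes "c > 0" shows "norm e \<le> (2 / c + 2) * VV c e"
proof -
  note g = VV_ge[OF assms, of e]
  have "norm e \<le> \<bar>e$1\<bar> + \<bar>e$2\<bar> + \<bar>e$3\<bar> + \<bar>e$4\<bar>"
    using norm_le_l1_cart[of e] by (simp add: sum_4)
  also have "\<dots> \<le> VV c e / c + VV c e / c + VV c e + VV c e" using g by linarith
  also have "\<dots> = (2 / c + 2) * VV c e" by (simp add: algebra_simps)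
  finally show ?thesis .
qed

theorem theorem9:
  fixes \<alpha> \<beta> \<tau> D0 pa1 pa2 pd1 pd2 :: real
  assumes "\<alpha> > 0" and "\<tau> = \<beta> / \<alpha>" and "0 \<le> \<tau>" and "\<tau> < 1"
  shows "invertible (mat 1 - X_mat \<tau>) \<and>
    (\<forall>p0 :: real^4.
       price_iter (X_mat \<tau>) (Y_vec \<alpha> \<beta> D0 pa1 pa2 pd1 pd2) p0
         \<longlonglongrightarrow> matrix_inv (mat 1 - X_mat \<tau>) *v Y_vec \<alpha> \<beta> D0 pa1 pa2 pd1 pd2)"
proof -
  define c where "c = 4 * (1 + \<tau>) / (5 - \<tau>)"
  define q where "q = max (2 * (1 + \<tau>) / (5 - \<tau>)) ((5 + 3 * \<tau>) / 8)"
  define X where "X = X_mat \<tau>"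
  define Y where "Y = Y_vec \<alpha> \<beta> D0 pa1 pa2 pd1 pd2"
  have c0: "c > 0" and q1: "q < 1" and q0: "q \<ge> 0"
    using cq[OF assms(3,4)] unfolding c_def q_def by auto
  have con: "VV c (X *v e) \<le> q * VV c e" for e
    using contract[OF assms(3,4), of e] unfolding c_def q_def X_def by simp
  have inj: "x = 0" if "(mat 1 - X) *v x = 0" for x
  proof -
    have "x = X *v x" using that by (simp add: matrix_vector_mult_diff_rdistrib)
    then have "VV c x \<le> q * VV c x" using con[of x] by simp
    then have "(1 - q) * VV c x \<le> 0" by (simp add: algebra_simps)
    moreover have "1 - q > 0" using q1 by simp
    ultimately have "VV c x \<le> 0" by (simp add: mult_le_0_iff)
    then show ?thesis using VV_zero[OF c0] by blast
  qed
  have inv: "invertible (mat 1 - X)"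
    unfolding invertible_left_inverse matrix_left_invertible_ker using inj by blast
  then obtain A' where A': "(mat 1 - X) ** A' = mat 1 \<and> A' ** (mat 1 - X) = mat 1"
    unfolding invertible_def by blast
  have MI: "(mat 1 - X) ** matrix_inv (mat 1 - X) = mat 1"
    unfolding matrix_inv_def using someI_ex[of "\<lambda>B. (mat 1 - X) ** B = mat 1 \<and> B ** (mat 1 - X) = mat 1"] A'
    by blast
  define ps where "ps = matrix_inv (mat 1 - X) *v Y"
  have fx: "(mat 1 - X) *v ps = Y" unfolding ps_def
    by (simp add: matrix_vector_mul_assoc MI)
  then have fix2: "X *v ps + Y = ps" by (simp add: matrix_vector_mult_diff_rdistrib) (metis add.commute diff_add_cancel)
  have conv: "price_iter X Y p0 \<longlonglongrightarrow> ps" for p0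
  proof -
    define e where "e t = price_iter X Y p0 t - ps" for t
    have step: "e (Suc t) = X *v e t" for t
      unfolding e_def using fix2 by (simp add: matrix_vector_mult_diff_distrib algebra_simps)
    have bound: "VV c (e t) \<le> q ^ t * VV c (e 0)" for t
    proof (induction t)
      case 0 then show ?case by simp
    next
      case (Suc t)
      have "VV c (e (Suc t)) \<le> q * VV c (e t)" using con step by simp
      also have "\<dots> \<le> q * (q ^ t * VV c (e 0))" using Suc q0 by (rule mult_left_mono)
      finally show ?case by simp
    qed
    have nb: "norm (e t) \<le> ((2 / c + 2) * VV c (e 0)) * q ^ t" for t
    proof -
      have "norm (e t) \<le> (2 / c + 2) * VV c (e t)" by (rule norm_VV[OF c0])
      also have "\<dots> \<le> (2 / c + 2) * (q ^ t * VV c (e 0))"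
        using bound c0 by (intro mult_left_mono) auto
      finally show ?thesis by (simp add: algebra_simps)
    qed
    have "(\<lambda>t. ((2 / c + 2) * VV c (e 0)) * q ^ t) \<longlonglongrightarrow> 0"
      using q0 q1 by (intro tendsto_mult_right_zero LIMSEQ_power_zero) auto
    then have "e \<longlonglongrightarrow> 0"
      by (rule Lim_null_comparison[rotated]) (use nb in auto)
    then show ?thesis unfolding e_def by (rule LIM_zero_cancel)
  qed
  show ?thesis using inv conv unfolding X_def Y_def ps_def by blast
qed

end
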